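(* Let $a\in\overline{\mathbb{F}}_2^*$ and let $n>1$ be an odd integer. Then: (i) $0$ is the unique critical value of $X^n$, and $\mathcal{R}_{X^n}(0)=[n]$, where $0$ is the unique root of $X^n$; (ii) $0$ is the unique critical value of $f(X):=D_n(X,a)$, and $\mathcal{R}_f(0)$ consists of one $1$ and $(n-1)/2$ copies of $2$, where $0$ is the unique root of $f(X)$ with ramification index $1$.
   Context: For a field $K$, $a\in K$ and positive integer $n$, the Dickson polynomial $D_n(X,a)\in K[X]$ is the unique polynomial with $D_n(X+a/X,a)=X^n+a^n/X^n$; explicitly $D_n(X,a)=\sum_{i=0}^{\lfloor n/2\rfloor}\frac{n}{n-i}\binom{n-i}{i}(-a)^iX^{n-2i}$. For nonconstant $f(X)\in K[X]$, a critical point is $c\in\overline{K}$ with $f'(c)=0$, and a critical value is $f(c)$ for a critical point $c$. The ramification index $e_f(c)$ is the multiplicity of $c$ as a root of $f(X)-f(c)$, and the ramification multiset $\mathcal{R}_f(d)$ for $d\in\overline{K}$ is the multiset of multiplicities of the roots of $f(X)-d$ in $\overline{K}$. *)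

theory Defs
  imports "HOL-Algebra.Algebraic_Closure_Type" "HOL-Library.Z2" "HOL-Library.Multiset"
begin

text \<open>The rational coefficient n/(n-i) * binom(n-i,i) is a nonnegative integer
  (for n \<ge> 1), computed here by exact natural-number division.\<close>
definition dickson :: "nat \<Rightarrow> 'a::comm_ring_1 \<Rightarrow> 'a poly" where
  "dickson n a = (\<Sum>i\<in>{0..n div 2}.
      monom (of_nat ((n * ((n - i) choose i)) div (n - i)) * (- a) ^ i) (n - 2 * i))"

definition critical_points :: "'a::idom poly \<Rightarrow> 'a set" where
  "critical_points f = {c. poly (pderiv f) c = 0}"

definition critical_values :: "'a::idom poly \<Rightarrow> 'a set" where
  "critical_values f = poly f ` critical_points f"

definition ram_index :: "'a::idom poly \<Rightarrow> 'a \<Rightarrow> nat" where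
  "ram_index f c = order c (f - [:poly f c:])"

definition ram_mset :: "'a::idom poly \<Rightarrow> 'a \<Rightarrow> nat multiset" where
  "ram_mset f d = image_mset (\<lambda>r. order r (f - [:d:])) (mset_set {r. poly (f - [:d:]) r = 0})"

end

theory Submission
  imports Defs
begin


definition dc :: "nat \<Rightarrow> nat \<Rightarrow> nat" where
  "dc n i = n * ((n - i) choose i) div (n - i)"

lemma dc_0: "n \<ge> 1 \<Longrightarrow> dc n 0 = 1"
  by (simp add: dc_def)

lemma dc_big: "n < 2 * i \<Longrightarrow> dc n i = 0"
  by (simp add: dc_def binomial_eq_0)

lemma dc_eq:
  assumes "1 \<le> i" "2 * i \<le> n"
  shows "dc n i = ((n - i) choose i) + ((n - i - 1) choose (i - 1))"
proof -
  obtain t where t: "i = Suc t" using assms by (cases i) auto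
  obtain p where p: "n - i = Suc p" using assms by (cases "n - i") auto
  have n: "n = Suc p + Suc t" using p t assms by simp
  have e: "Suc t * (Suc p choose Suc t) = Suc p * (p choose t)"
    by (rule Suc_times_binomial)
  have "n * (Suc p choose Suc t) = Suc p * ((Suc p choose Suc t) + (p choose t))"
    unfolding n using e by (simp add: algebra_simps del: binomial_Suc_Suc)
  then have "dc n i = Suc p * ((Suc p choose Suc t) + (p choose t)) div Suc p"
    unfolding dc_def using p t by (simp del: binomial_Suc_Suc)
  also have "\<dots> = (Suc p choose Suc t) + (p choose t)"
    by (rule nonzero_mult_div_cancel_left) simp
  finally have "dc n i = (Suc p choose Suc t) + (p choose t)" .
  moreover have p': "n - i - 1 = p" using p by simp
  moreover have t': "i - 1 = t" using t by simp
  ultimately show ?thesis unfolding p' t' p by (simp only: t)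
qed

lemma dc_rec:
  assumes "n \<ge> 1" "1 \<le> j" "2 * j \<le> n + 1"
  shows "dc (n + 2) j = dc (n + 1) j + dc n (j - 1)"
proof (cases "j = 1")
  case True
  then show ?thesis using assms by (simp add: dc_eq dc_0)
next
  case False
  then obtain t where t: "j = Suc (Suc t)" using assms by (cases j; cases "j - 1") auto
  define p where "p = n - j"
  have p: "n = j + p" using assms unfolding p_def by simp
  have "dc (n + 2) j = ((p + 2) choose j) + ((p + 1) choose (j - 1))"
    using assms p by (subst dc_eq) (auto simp: numeral_eq_Suc)
  moreover have "dc (n + 1) j = ((p + 1) choose j) + (p choose (j - 1))"
    using assms p by (subst dc_eq) auto
  moreover have "dc n (j - 1) = ((p + 1) choose (j - 1)) + (p choose (j - 2))"
    using assms p t by (subst dc_eq) auto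
  ultimately show ?thesis using t by (simp add: numeral_eq_Suc)
qed



definition dco :: "nat \<Rightarrow> 'a::comm_ring_1 \<Rightarrow> nat \<Rightarrow> 'a" where
  "dco n a k = (if k \<le> n \<and> even (n - k) then of_nat (dc n ((n - k) div 2)) * (- a) ^ ((n - k) div 2) else 0)"

lemma coeff_dickson: "coeff (dickson n a) k = dco n a k"
proof -
  have "coeff (dickson n a) k = (\<Sum>i\<in>{0..n div 2}. if n - 2 * i = k then of_nat (dc n i) * (- a) ^ i else 0)"
    unfolding dickson_def coeff_sum coeff_monom dc_def by simp
  also have "\<dots> = dco n a k"
  proof (cases "k \<le> n \<and> even (n - k)")
    case True
    define j where "j = (n - k) div 2"
    have "(\<Sum>i\<in>{0..n div 2}. if n - 2 * i = k then of_nat (dc n i) * (- a) ^ i else 0)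
        = (\<Sum>i\<in>{0..n div 2}. if i = j then of_nat (dc n i) * (- a) ^ i else (0::'a))"
      by (rule sum.cong) (use True in \<open>auto simp: j_def elim!: evenE\<close>)
    also have "\<dots> = of_nat (dc n j) * (- a) ^ j"
      using True by (subst sum.delta) (auto simp: j_def)
    finally show ?thesis unfolding dco_def if_P[OF True] j_def .
  next
    case False
    have "(\<Sum>i\<in>{0..n div 2}. if n - 2 * i = k then of_nat (dc n i) * (- a) ^ i else 0) = (\<Sum>i\<in>{0..n div 2}. (0::'a))"
      by (rule sum.cong) (use False in auto)
    then show ?thesis unfolding dco_def if_not_P[OF False] by simp
  qed
  finally show ?thesis .
qed

lemma dickson_rec:
  fixes a :: "'a::comm_ring_1"
  assumes "n \<ge> 1"
  shows "dickson (n + 2) a = pCons 0 (dickson (n + 1) a) - smult a (dickson n a)"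
proof (rule poly_eqI)
  fix k
  show "coeff (dickson (n + 2) a) k = coeff (pCons 0 (dickson (n + 1) a) - smult a (dickson n a)) k"
  proof (cases k)
    case 0
    show ?thesis
    proof (cases "even n")
      case True
      then obtain t where t: "n = 2 * t" by (rule evenE)
      with assms have t1: "t \<ge> 1" by simp
      have "dc (2 * t + 2) (t + 1) = 2" by (subst dc_eq) auto
      moreover have "dc (2 * t) t = 2" using t1 by (subst dc_eq) auto
      ultimately show ?thesis using 0 t by (simp add: coeff_dickson dco_def)
    next
      case False
      then show ?thesis using 0 by (simp add: coeff_dickson dco_def)
    qed
  next
    case (Suc k')
    consider "k' > n + 1" | "k' \<le> n + 1" "odd (n + 1 - k')" | "k' = n + 1"
      | "k' \<le> n" "even (n + 1 - k')" by linarith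
    then show ?thesis
    proof cases
      case 1 then show ?thesis using Suc by (simp add: coeff_dickson dco_def)
    next
      case 2
      have "odd (n - Suc k')" if "Suc k' \<le> n" using 2 that
        by presburger
      then show ?thesis using 2 Suc by (auto simp: coeff_dickson dco_def)
    next
      case 3 then show ?thesis using Suc assms by (simp add: coeff_dickson dco_def dc_0)
    next
      case 4
      from 4(2) obtain j where j: "n + 1 - k' = 2 * j" by (rule evenE)
      have kn: "k' < n" using 4 j by (cases "k' = n") auto
      have j1: "j \<ge> 1" using j kn by simp
      have e1: "n + 2 - Suc k' = 2 * j" using j 4 by simp
      have e2: "n - Suc k' = 2 * (j - 1)" using j kn j1 by simp
      have r: "dc (n + 2) j = dc (n + 1) j + dc n (j - 1)"
        by (rule dc_rec) (use assms j1 j in auto)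
      have pw: "(- a) ^ j = (- a) * (- a) ^ (j - 1)" using j1
        by (metis Suc_diff_le diff_Suc_1 power_Suc)
      have L: "coeff (dickson (n + 2) a) k = of_nat (dc (n + 2) j) * (- a) ^ j"
        unfolding Suc coeff_dickson dco_def using e1 kn by simp
      have R1: "coeff (dickson (n + 1) a) k' = of_nat (dc (n + 1) j) * (- a) ^ j"
        unfolding coeff_dickson dco_def using j kn by simp
      have R2: "coeff (dickson n a) k = of_nat (dc n (j - 1)) * (- a) ^ (j - 1)"
        unfolding Suc coeff_dickson dco_def using e2 kn by simp
      show ?thesis unfolding L coeff_diff coeff_smult R2 unfolding Suc coeff_pCons_Suc R1 r of_nat_add pw
        by (simp add: algebra_simps)
    qed
  qed
qed

lemma dickson_1: "dickson 1 a = [:0, 1:]"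
  by (simp add: dickson_def dc_def monom_altdef)

lemma dickson_2: "dickson 2 (a :: 'a :: comm_ring_1) = [:- 2 * a, 0, 1:]"
  by (rule poly_eqI) (auto simp: coeff_dickson dco_def dc_def coeff_pCons split: nat.splits)

lemma dickson_funeq:
  fixes a x :: "'a::field"
  assumes "x \<noteq> 0" "n \<ge> 1"
  shows "poly (dickson n a) (x + a / x) = x ^ n + (a / x) ^ n"
  using assms(2)
proof (induction n rule: nat_less_induct)
  case (1 n)
  define w where "w = a / x"
  have a: "a = x * w" using assms(1) by (simp add: w_def)
  consider "n = 1" | "n = 2" | "n \<ge> 3" using 1(2) by linarith
  then show ?case
  proof cases
    case 1 then show ?thesis by (simp add: dickson_1[simplified])
  next
    case 2 then show ?thesis by (simp add: dickson_2 a w_def[symmetric] algebra_simps power2_eq_square)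
  next
    case 3
    define m where "m = n - 2"
    have m: "n = m + 2" "m \<ge> 1" using 3 by (auto simp: m_def)
    have IH1: "poly (dickson (m + 1) a) (x + a / x) = x ^ (m + 1) + (a / x) ^ (m + 1)"
      using 1(1) m by auto
    have IH2: "poly (dickson m a) (x + a / x) = x ^ m + (a / x) ^ m"
      using 1(1) m by auto
    show ?thesis unfolding m(1) dickson_rec[OF m(2)] using IH1 IH2
      by (simp add: w_def[symmetric] a algebra_simps)
  qed
qed



type_synonym F = "bit alg_closure"

lemma F_two: "(2::F) = 0"
proof -
  have "(2::F) = to_ac (2::bit)" by (simp only: to_ac_numeral)
  also have "\<dots> = to_ac 0" by (simp only: bit_2_eq_0)
  also have "\<dots> = 0" by (rule to_ac_0)
  finally show ?thesis .
qed

lemma F_one_one: "(1::F) + 1 = 0"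
  using F_two by (metis one_add_one)

lemma F_add_self: "x + x = (0::F)"
proof -
  have "x + x = x * (1 + 1)" by (simp add: algebra_simps)
  then show ?thesis by (simp only: F_one_one mult_zero_right)
qed

lemma F_neg: "- x = (x::F)"
  using F_add_self[of x] by (metis add_eq_0_iff)

lemma F_of_nat: "(of_nat k :: F) = (if even k then 0 else 1)"
  by (induction k) (auto simp: F_two)

lemma F_of_nat_sq: "(of_nat k :: F) ^ 2 = of_nat k"
  by (simp add: F_of_nat)

lemma Fp_add_self: "p + p = (0::F poly)"
  by (rule poly_eqI) (simp only: coeff_add F_add_self coeff_0)

lemma Fp_sq_add: "(p + q) ^ 2 = p ^ 2 + (q ^ 2 :: F poly)"
proof -
  have "(p + q) ^ 2 = p ^ 2 + q ^ 2 + (p * q + p * q)"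
    by (simp add: power2_eq_square algebra_simps)
  then show ?thesis by (simp add: Fp_add_self)
qed

lemma Fp_sq_sum: "finite A \<Longrightarrow> (\<Sum>i\<in>A. f i) ^ 2 = (\<Sum>i\<in>A. (f i) ^ 2 :: F poly)"
  by (induction A rule: finite_induct) (simp_all add: Fp_sq_add)

lemma Fp_pderiv_sq: "pderiv (p ^ 2 :: F poly) = 0"
  by (simp add: pderiv_power F_two)



lemma double_root_pderiv:
  fixes q :: "'a::idom poly"
  shows "poly (pderiv ([:-x, 1:] ^ 2 * q)) x = 0"
  by (simp add: pderiv_mult pderiv_power pderiv_pCons)

lemma card_roots_sep:
  fixes p :: "'a::alg_closed_field poly"
  assumes p0: "p \<noteq> 0" and sep: "\<And>z. poly p z = 0 \<Longrightarrow> poly (pderiv p) z \<noteq> 0"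
  shows "card {z. poly p z = 0} = degree p"
proof -
  obtain A where A: "size A = degree p" "p = smult (lead_coeff p) (\<Prod>x\<in>#A. [:-x, 1:])"
    using alg_closed_imp_factorization[OF p0] by blast
  have lc: "lead_coeff p \<noteq> 0" using p0 by simp
  have roots: "{z. poly p z = 0} = set_mset A"
  proof -
    have "poly p z = lead_coeff p * (\<Prod>x\<in>#A. z - x)" for z
      by (subst A(2)) (simp add: poly_prod_mset)
    then show ?thesis using lc by auto
  qed
  have cnt: "count A x = 1" if "x \<in># A" for x
  proof (rule ccontr)
    assume "count A x \<noteq> 1"
    moreover have "count A x > 0" using that by simp
    ultimately have ge2: "count A x \<ge> 2" by linarith
    have A1: "A = add_mset x (A - {#x#})" using that by (simp add: insert_DiffM)
    have "x \<in># A - {#x#}" using ge2 by (simp add: in_diff_count)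
    note xin = this
    define B where "B = A - {#x#} - {#x#}"
    have B: "A = add_mset x (add_mset x B)" unfolding B_def
      by (subst insert_DiffM[OF xin]) (rule A1)
    define c where "c = lead_coeff p"
    have "p = smult c (\<Prod>y\<in>#add_mset x (add_mset x B). [:-y, 1:])"
      using A(2) unfolding B c_def .
    also have "\<dots> = [:-x, 1:] ^ 2 * smult c (\<Prod>y\<in>#B. [:-y, 1:])"
      by (simp only: image_mset_add_mset prod_mset.add_mset power2_eq_square mult_smult_right mult.assoc)
    finally have peq: "p = [:-x, 1:] ^ 2 * smult c (\<Prod>y\<in>#B. [:-y, 1:])" .
    have "poly (pderiv p) x = 0" by (subst peq) (rule double_root_pderiv)
    moreover have "poly p x = 0" using roots that by auto
    ultimately show False using sep by blast
  qed
  have "size A = (\<Sum>x\<in>set_mset A. count A x)" by (rule size_multiset_overloaded_eq)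
  also have "\<dots> = card (set_mset A)" using cnt by simp
  finally show ?thesis using A(1) roots by simp
qed

lemma card_le_twice_image:
  assumes "finite A" and fib: "\<And>y. card {x\<in>A. f x = y} \<le> 2"
  shows "card A \<le> 2 * card (f ` A)"
proof -
  have "A = (\<Union>y\<in>f ` A. {x\<in>A. f x = y})" by blast
  then have "card A = card (\<Union>y\<in>f ` A. {x\<in>A. f x = y})" by (rule arg_cong)
  also have "\<dots> \<le> (\<Sum>y\<in>f ` A. card {x\<in>A. f x = y})"
    by (rule card_UN_le) (rule finite_imageI[OF assms(1)])
  also have "\<dots> \<le> (\<Sum>y\<in>f ` A. 2)" by (rule sum_mono) (rule fib)
  also have "\<dots> = 2 * card (f ` A)" by simp
  finally show ?thesis .
qed

lemma sum_ge1_le_card: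
  fixes h :: "'a \<Rightarrow> nat"
  assumes "finite R" "\<And>r. r \<in> R \<Longrightarrow> h r \<ge> 1" "(\<Sum>r\<in>R. h r) \<le> card R"
  shows "\<forall>r\<in>R. h r = 1"
proof -
  have "(\<Sum>r\<in>R. h r) = (\<Sum>r\<in>R. 1 + (h r - 1))"
  proof (intro sum.cong refl)
    fix r assume "r \<in> R"
    then have "h r \<ge> 1" by (rule assms(2))
    then show "h r = 1 + (h r - 1)" by linarith
  qed
  also have "\<dots> = (\<Sum>r\<in>R. 1) + (\<Sum>r\<in>R. h r - 1)" by (rule sum.distrib)
  also have "(\<Sum>r\<in>R. (1::nat)) = card R" by simp
  finally have s0: "(\<Sum>r\<in>R. h r - 1) = 0" using assms(3) by linarith
  have z: "h r - 1 = 0" if "r \<in> R" for r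
    using that s0 sum_eq_0_iff[OF assms(1), of "\<lambda>r. h r - 1"] by simp
  show ?thesis
  proof
    fix r assume r: "r \<in> R"
    show "h r = 1" using z[OF r] assms(2)[OF r] by linarith
  qed
qed



lemma X_mult_monom: "[:0, 1:] * monom (c::'a::comm_ring_1) k = monom c (Suc k)"
  by (simp add: monom_Suc smult_1_left)

lemma dc_mid: "dc (2 * m + 1) m = 2 * m + 1"
proof -
  have h: "2 * m + 1 - m = Suc m" by simp
  have "dc (2 * m + 1) m = (2 * m + 1) * Suc m div Suc m" unfolding dc_def h binomial_Suc_n ..
  also have "\<dots> = 2 * m + 1" by (rule nonzero_mult_div_cancel_right) simp
  finally show ?thesis .
qed

lemma dickson_char2:
  fixes a b :: F
  assumes b2: "b ^ 2 = a" and n: "n = 2 * m + 1"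
  shows "dickson n a = [:0, 1:] * (\<Sum>i\<in>{0..m}. monom (of_nat (dc n i) * b ^ i) (m - i)) ^ 2"
proof -
  have sq: "(monom (of_nat (dc n i) * b ^ i) (m - i)) ^ 2 = monom (of_nat (dc n i) * a ^ i) ((m - i) * 2)" for i
  proof -
    have "(b ^ i) ^ 2 = b ^ (i * 2)" by (rule power_mult[symmetric])
    also have "\<dots> = (b ^ 2) ^ i" by (metis mult.commute power_mult)
    finally have bi: "(b ^ i) ^ 2 = a ^ i" using b2 by simp
    show ?thesis unfolding monom_power power_mult_distrib bi F_of_nat_sq ..
  qed
  have "[:0, 1:] * (\<Sum>i\<in>{0..m}. monom (of_nat (dc n i) * b ^ i) (m - i)) ^ 2
      = (\<Sum>i\<in>{0..m}. monom (of_nat (dc n i) * a ^ i) (Suc ((m - i) * 2)))"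
    unfolding Fp_sq_sum[OF finite_atLeastAtMost] sq sum_distrib_left X_mult_monom ..
  also have "\<dots> = (\<Sum>i\<in>{0..n div 2}. monom (of_nat (dc n i) * (- a) ^ i) (n - 2 * i))"
  proof -
    have nd: "n div 2 = m" using n by simp
    show ?thesis unfolding nd F_neg[of a]
    proof (intro sum.cong refl)
      fix i assume "i \<in> {0..m}"
      then have "Suc ((m - i) * 2) = n - 2 * i" using n by auto
      then show "monom (of_nat (dc n i) * a ^ i) (Suc ((m - i) * 2)) = monom (of_nat (dc n i) * a ^ i) (n - 2 * i)"
        by (simp only:)
    qed
  qed
  also have "\<dots> = dickson n a" unfolding dickson_def dc_def ..
  finally show ?thesis ..
qed



lemma part_i:
  assumes "odd n" "n > 1"
  shows "critical_values (monom 1 n :: F poly) = {0}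
       \<and> ram_mset (monom 1 n :: F poly) 0 = {#n#}
       \<and> {r. poly (monom 1 n :: F poly) r = 0} = {0}"
proof -
  have on: "(of_nat n :: F) = 1" using assms(1) by (simp add: F_of_nat)
  have pd: "pderiv (monom 1 n :: F poly) = monom 1 (n - 1)"
    by (simp add: pderiv_monom on)
  have cp: "critical_points (monom 1 n :: F poly) = {0}"
    unfolding critical_points_def pd poly_monom using assms(2) by auto
  have roots: "{r. poly (monom 1 n :: F poly) r = 0} = {0}"
    unfolding poly_monom using assms(2) by auto
  have mx: "(monom 1 n :: F poly) = [:- 0, 1:] ^ n" by (simp add: monom_altdef)
  have ord: "order 0 (monom 1 n :: F poly) = n" unfolding mx by (rule order_power_n_n)
  have "ram_mset (monom 1 n :: F poly) 0 = {#n#}"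
    unfolding ram_mset_def using roots ord by simp
  moreover have "critical_values (monom 1 n :: F poly) = {0}"
    unfolding critical_values_def cp using assms(2) by (simp add: poly_monom)
  ultimately show ?thesis using roots by blast
qed



lemma part_ii:
  fixes a :: F
  assumes a0: "a \<noteq> 0" and odd: "odd n" and n1: "n > 1"
  shows "critical_values (dickson n a) = {0}
       \<and> ram_mset (dickson n a) 0 = {#1#} + replicate_mset ((n - 1) div 2) 2
       \<and> {r. poly (dickson n a) r = 0 \<and> ram_index (dickson n a) r = 1} = {0}"
proof -
  define m where "m = (n - 1) div 2"
  have n: "n = 2 * m + 1" using odd unfolding m_def by (auto elim!: oddE)
  have m1: "m \<ge> 1" using n n1 by simp
  obtain b where b2: "b ^ 2 = a" using nth_root_exists[of 2 a] by auto
  have b0: "b \<noteq> 0" using b2 a0 by auto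
  define g where "g = (\<Sum>i\<in>{0..m}. monom (of_nat (dc n i) * b ^ i) (m - i))"
  define f where "f = dickson n a"
  have fg: "f = [:0, 1:] * g ^ 2" unfolding f_def g_def by (rule dickson_char2[OF b2 n])
  have polyf: "poly f y = y * (poly g y) ^ 2" for y by (simp add: fg)
  have g0: "poly g 0 \<noteq> 0"
  proof -
    have "poly g 0 = (\<Sum>i\<in>{0..m}. if m - i = 0 then of_nat (dc n i) * b ^ i else 0)"
      unfolding poly_0_coeff_0 g_def coeff_sum coeff_monom ..
    also have "\<dots> = (\<Sum>i\<in>{0..m}. if i = m then of_nat (dc n i) * b ^ i else 0)"
      by (intro sum.cong refl) auto
    also have "\<dots> = of_nat (dc n m) * b ^ m" by simp
    also have "\<dots> = b ^ m" using dc_mid[of m] n odd by (simp add: F_of_nat)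
    finally show ?thesis using b0 by simp
  qed
  have gnz: "g \<noteq> 0" using g0 by auto
  have fnz: "f \<noteq> 0" using gnz by (simp add: fg)
  have degg: "degree g \<le> m" unfolding g_def
    by (rule degree_sum_le) (auto intro: order.trans[OF degree_monom_le])
  define R where "R = {y. poly g y = 0}"
  have finR: "finite R" unfolding R_def using gnz by (rule poly_roots_finite)
  have R0: "0 \<notin> R" unfolding R_def using g0 by simp
  have rootsf: "{y. poly f y = 0} = insert 0 R" unfolding R_def polyf by auto
  define U where "U = {z::F. poly (monom 1 n - 1) z = 0}"
  have U_eq: "U = {z. z ^ n = 1}" unfolding U_def by (simp add: poly_monom)
  have cardU: "card U = n"
  proof -
    have pe: "monom 1 n - 1 = monom 1 n + [:-1::F:]" by (simp add: one_pCons)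
    have dg: "degree (monom 1 n - 1 :: F poly) = n"
      unfolding pe using n1 by (subst degree_add_eq_left) (auto simp: degree_monom_eq)
    have nz: "monom 1 n - 1 \<noteq> (0 :: F poly)" using dg n1 by auto
    have on: "(of_nat n :: F) = 1" using odd by (simp add: F_of_nat)
    have sep: "poly (pderiv (monom 1 n - 1)) z \<noteq> 0" if "poly (monom 1 n - 1) z = 0" for z :: F
    proof -
      have "z ^ n = 1" using that by (simp add: poly_monom)
      then have "z \<noteq> 0" using n1 by (auto simp: power_0_left)
      then show ?thesis by (simp add: pderiv_diff pderiv_monom on poly_monom)
    qed
    show ?thesis unfolding U_def using card_roots_sep[OF nz sep] dg by simp
  qed
  have finU: "finite U" using cardU n1 by (intro card_ge_0_finite) simp
  have oneU: "1 \<in> U" unfolding U_eq by simp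
  define U' where "U' = U - {1}"
  have finU': "finite U'" unfolding U'_def using finU by simp
  have cardU': "card U' = 2 * m" unfolding U'_def using cardU oneU finU n by simp
  define \<phi> where "\<phi> = (\<lambda>z. b * z + a / (b * z))"
  have U_nz: "z \<noteq> 0" if "z \<in> U" for z using that n1 unfolding U_eq by (auto simp: power_0_left)
  have phi_root: "poly f (\<phi> z) = 0" if "z \<in> U" for z
  proof -
    have z0: "z \<noteq> 0" using U_nz that .
    have zn: "z ^ n = 1" using that unfolding U_eq by simp
    have "poly f (\<phi> z) = (b * z) ^ n + (a / (b * z)) ^ n"
      unfolding f_def \<phi>_def by (rule dickson_funeq) (use z0 b0 n1 in auto)
    also have "(b * z) ^ n = b ^ n" using zn by (simp add: power_mult_distrib)
    also have "(a / (b * z)) ^ n = b ^ n"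
    proof -
      have "(a / (b * z)) ^ n = (b ^ 2) ^ n / (b ^ n * z ^ n)"
        using b2 by (simp add: power_divide power_mult_distrib)
      also have "\<dots> = b ^ n * b ^ n / b ^ n"
      proof -
        have "(b ^ 2) ^ n = b ^ n * b ^ n" by (simp add: power2_eq_square power_mult_distrib)
        then show ?thesis using zn by simp
      qed
      also have "\<dots> = b ^ n" using b0 by simp
      finally show ?thesis .
    qed
    finally show ?thesis by (simp add: F_add_self)
  qed
  have phi_nz: "\<phi> z \<noteq> 0" if "z \<in> U'" for z
  proof
    assume h: "\<phi> z = 0"
    have z0: "z \<noteq> 0" using U_nz that unfolding U'_def by auto
    have z1: "z \<noteq> 1" using that unfolding U'_def by auto
    have bz: "b * z \<noteq> 0" using z0 b0 by simp
    have "b * z * (b * z) + a = (b * z) * \<phi> z" unfolding \<phi>_def using bz by (simp add: field_simps)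
    then have "b * z * (b * z) + a = 0" using h by simp
    moreover have "b * z * (b * z) = b ^ 2 * (z * z)" by (simp add: power2_eq_square algebra_simps)
    ultimately have "a * (z * z) + a = 0" using b2 by simp
    then have "a * (z * z + 1) = 0" by (simp add: algebra_simps)
    then have "z * z + 1 = 0" using a0 by simp
    moreover have "(z + 1) * (z + 1) = z * z + 1 + 2 * z" by (simp add: algebra_simps)
    ultimately have "(z + 1) * (z + 1) = 0" by (simp add: F_two)
    then have "z + 1 = 0" by simp
    then have "z = - 1" by (simp add: eq_neg_iff_add_eq_0)
    then show False using z1 F_neg[of 1] by simp
  qed
  have phiR: "\<phi> ` U' \<subseteq> R"
  proof
    fix y assume "y \<in> \<phi> ` U'"
    then obtain z where z: "z \<in> U'" "y = \<phi> z" by auto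
    have "poly f y = 0" using phi_root z unfolding U'_def by auto
    moreover have "y \<noteq> 0" using phi_nz z by auto
    ultimately show "y \<in> R" using rootsf by auto
  qed
  have fib: "card {z\<in>U'. \<phi> z = y} \<le> 2" for y
  proof (cases "\<exists>z0\<in>U'. \<phi> z0 = y")
    case False
    then have e: "{z\<in>U'. \<phi> z = y} = {}" by auto
    show ?thesis unfolding e by simp
  next
    case True
    then obtain z0 where z0: "z0 \<in> U'" "\<phi> z0 = y" by auto
    have z00: "z0 \<noteq> 0" using U_nz z0 unfolding U'_def by auto
    have sub: "{z\<in>U'. \<phi> z = y} \<subseteq> {z0, 1 / z0}"
    proof
      fix z assume zz: "z \<in> {z\<in>U'. \<phi> z = y}"
      then have zU: "z \<in> U'" and eq: "\<phi> z = \<phi> z0" using z0 by auto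
      have zn0: "z \<noteq> 0" using U_nz zU unfolding U'_def by auto
      have key: "b * ((z - z0) * (z * z0 - 1)) = (\<phi> z - \<phi> z0) * (z * z0)"
        unfolding \<phi>_def using zn0 z00 b0 b2[symmetric]
        by (simp add: field_simps power2_eq_square)
      then have "(z - z0) * (z * z0 - 1) = 0" using eq b0 by simp
      then have "z = z0 \<or> z * z0 = 1" by simp
      then have "z = z0 \<or> z = 1 / z0" using z00 by (auto simp: field_simps)
      then show "z \<in> {z0, 1 / z0}" by simp
    qed
    have "card {z\<in>U'. \<phi> z = y} \<le> card {z0, 1 / z0}" by (rule card_mono) (simp_all add: sub)
    also have "\<dots> \<le> 2" by (simp add: card_insert_if)
    finally show ?thesis .
  qed
  have "2 * m \<le> 2 * card (\<phi> ` U')" using card_le_twice_image[OF finU' fib] cardU' by simp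
  then have "m \<le> card (\<phi> ` U')" by simp
  also have "\<dots> \<le> card R" by (rule card_mono[OF finR phiR])
  finally have mR: "m \<le> card R" .
  have "size (proots g) = (\<Sum>r\<in>R. order r g)"
    using size_multiset_overloaded_eq[of "proots g"] gnz unfolding R_def by simp
  moreover have "size (proots g) \<le> m" using size_proots_le[of g] degg by linarith
  ultimately have sumR: "(\<Sum>r\<in>R. order r g) \<le> m" by simp
  have ord1: "\<forall>r\<in>R. order r g = 1"
  proof (rule sum_ge1_le_card[OF finR])
    fix r assume "r \<in> R"
    then show "order r g \<ge> 1" using gnz unfolding R_def by (simp add: order_root Suc_le_eq)
  next
    show "(\<Sum>r\<in>R. order r g) \<le> card R" using sumR mR by linarith
  qed
  have "(\<Sum>r\<in>R. order r g) = card R" using ord1 by simp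
  then have cardR: "card R = m" using sumR mR by linarith
  have g2nz: "g ^ 2 \<noteq> 0" using gnz by simp
  have ordf: "order r f = order r [:0, 1:] + 2 * order r g" for r
  proof -
    have "order r f = order r [:0, 1:] + order r (g * g)"
      unfolding fg power2_eq_square by (rule order_mult) (use gnz in simp)
    also have "order r (g * g) = 2 * order r g" by (subst order_mult) (use gnz in simp_all)
    finally show ?thesis .
  qed
  have oX0: "order 0 [:0, 1::F:] = (1::nat)"
    using order_power_n_n[of "0::F" 1] by simp
  have oX: "order r [:0, 1::F:] = 0" if "r \<noteq> 0" for r
    by (rule order_0I) (use that in simp)
  have of0: "order 0 f = 1" using ordf[of 0] oX0 order_0I[OF g0] by simp
  have ofR: "order r f = 2" if "r \<in> R" for r
    using ordf[of r] oX[of r] ord1 that R0 by (metis mult.right_neutral add_0)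
  have pdf: "pderiv f = g ^ 2"
    unfolding fg pderiv_mult Fp_pderiv_sq by (simp add: pderiv_pCons)
  have cpf: "critical_points f = R" unfolding critical_points_def pdf R_def by simp
  have Rne: "R \<noteq> {}" using cardR m1 by auto
  have cvf: "critical_values f = {0}"
    unfolding critical_values_def cpf using Rne by (auto simp: polyf R_def)
  have fm0: "f - [:0:] = f" by simp
  have rm: "ram_mset f 0 = {#1#} + replicate_mset m 2"
  proof -
    have "ram_mset f 0 = image_mset (\<lambda>r. order r f) (mset_set (insert 0 R))"
      unfolding ram_mset_def fm0 rootsf ..
    also have "mset_set (insert 0 R) = add_mset 0 (mset_set R)"
      by (rule mset_set.insert[OF finR R0])
    also have "image_mset (\<lambda>r. order r f) (add_mset 0 (mset_set R)) = add_mset 1 (image_mset (\<lambda>r. order r f) (mset_set R))"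
      using of0 by simp
    also have "image_mset (\<lambda>r. order r f) (mset_set R) = image_mset (\<lambda>r. 2) (mset_set R)"
      by (rule image_mset_cong) (use ofR finR in simp)
    also have "\<dots> = replicate_mset m 2" using image_mset_const_eq[of 2 "mset_set R"] cardR by simp
    finally show ?thesis by simp
  qed
  have ri: "{r. poly f r = 0 \<and> ram_index f r = 1} = {0}"
  proof -
    have ri1: "ram_index f r = order r f" if "poly f r = 0" for r
      unfolding ram_index_def that by simp
    have "{r. poly f r = 0 \<and> ram_index f r = 1} = {r. poly f r = 0 \<and> order r f = 1}"
      using ri1 by (intro Collect_cong) auto
    also have "\<dots> = {r \<in> insert 0 R. order r f = 1}"
      using rootsf by blast
    also have "\<dots> = {0}" using of0 ofR by auto
    finally show ?thesis .
  qed
  show ?thesis using cvf rm ri unfolding f_def m_def by simp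
qed


theorem lemma2p19:
  fixes a :: "bit alg_closure" and n :: nat
  assumes "a \<noteq> 0" and "odd n" and "n > 1"
  shows "critical_values (monom 1 n :: bit alg_closure poly) = {0}
       \<and> ram_mset (monom 1 n :: bit alg_closure poly) 0 = {#n#}
       \<and> {r. poly (monom 1 n :: bit alg_closure poly) r = 0} = {0}
       \<and> critical_values (dickson n a) = {0}
       \<and> ram_mset (dickson n a) 0 = {#1#} + replicate_mset ((n - 1) div 2) 2
       \<and> {r. poly (dickson n a) r = 0 \<and> ram_index (dickson n a) r = 1} = {0}"
  using part_i[OF assms(2,3)] part_ii[OF assms] by blast

end
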